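(* Let $T_{\mathfrak{sl}_3} \in \mathfrak{sl}_3^* \otimes \mathfrak{sl}_3^* \otimes \mathfrak{sl}_3$ be the structure tensor of the complex Lie algebra $\mathfrak{sl}_3$. Then its tensor rank satisfies $\mathbf{R}(T_{\mathfrak{sl}_3}) \leq 20$.
   Context: $\mathfrak{sl}_n$ denotes the Lie algebra of traceless $n\times n$ complex matrices with bracket $[x,y]=xy-yx$. Its structure tensor $T_{\mathfrak{sl}_n}\in \mathfrak{sl}_n^*\otimes\mathfrak{sl}_n^*\otimes\mathfrak{sl}_n$ is the tensor corresponding to the bilinear map $(x,y)\mapsto [x,y]$; in a basis $\{a_i\}$ with dual basis $\{\alpha^i\}$ and $[a_i,a_j]=\sum_k A_{ij}^k a_k$, it is $\sum_{i,j,k} A_{ij}^k\,\alpha^i\otimes\alpha^j\otimes a_k$. For a tensor $T\in A\otimes B\otimes C$ over $\mathbb{C}$, the rank $\mathbf{R}(T)$ is the minimal $r$ such that $T=\sum_{i=1}^r a_i\otimes b_i\otimes c_i$ with $a_i\in A$, $b_i\in B$, $c_i\in C$. *)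

theory Defs
  imports "HOL-Analysis.Analysis"
begin

definition sl :: "(complex^'n^'n) set" where
  "sl = {x. trace x = 0}"

text \<open>A complex linear functional on n x n matrices, represented by its coefficient matrix.
  Every linear functional on sl_n is the restriction of such a functional.\<close>
definition mat_functional :: "complex^'n^'n \<Rightarrow> complex^'n^'n \<Rightarrow> complex" where
  "mat_functional a x = (\<Sum>j\<in>UNIV. \<Sum>k\<in>UNIV. a $ j $ k * x $ j $ k)"

definition mat_scale :: "complex \<Rightarrow> complex^'n^'n \<Rightarrow> complex^'n^'n" where
  "mat_scale s m = (\<chi> j k. s * m $ j $ k)"

text \<open>The structure tensor of sl_n, viewed as the bilinear map (x,y) to [x,y], admits a
  decomposition into r rank-one tensors alpha_i (x) beta_i (x) c_i with alpha_i, beta_i in sl_n^*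
  and c_i in sl_n.\<close>
definition sl_struct_decomp :: "'n::finite itself \<Rightarrow> nat \<Rightarrow> bool" where
  "sl_struct_decomp (_ :: 'n itself) r \<longleftrightarrow>
     (\<exists>(a :: nat \<Rightarrow> complex^'n^'n) (b :: nat \<Rightarrow> complex^'n^'n) (c :: nat \<Rightarrow> complex^'n^'n).
        (\<forall>i<r. c i \<in> sl) \<and>
        (\<forall>x\<in>sl. \<forall>y\<in>sl.
           x ** y - y ** x = (\<Sum>i<r. mat_scale (mat_functional (a i) x * mat_functional (b i) y) (c i))))"

definition sl_struct_rank :: "'n::finite itself \<Rightarrow> nat" where
  "sl_struct_rank (_ :: 'n itself) = (LEAST r. sl_struct_decomp TYPE('n) r)"

end

theory Submission
  imports Defs
begin

definition aa :: "nat \<Rightarrow> complex^3^3" where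
  "aa i = [
    vector [vector [0, 0, 0], vector [0, 0, 1], vector [0, 0, 0]],
    vector [vector [(1 / 2), 0, 0], vector [(- (1 / 2)), 0, (3 / 4)], vector [(1 / 2), 1, 1]],
    vector [vector [(1 / 2), 0, 0], vector [(- (1 / 2)), 0, (- (3 / 4))], vector [(1 / 2), 1, 1]],
    vector [vector [(- (1 / 2)), 0, 0], vector [(1 / 2), 0, (- (1 / 4))], vector [(- (1 / 2)), (- (1 / 2)), (- 1)]],
    vector [vector [0, 0, 0], vector [0, 0, 1], vector [0, 1, 0]],
    vector [vector [(1 / 2), (1 / 2), 0], vector [0, 0, 0], vector [1, (- (1 / 2)), (- (1 / 2))]],
    vector [vector [0, 0, 0], vector [0, 0, 0], vector [1, 0, 0]],
    vector [vector [(- (1 / 2)), (- (1 / 2)), 0], vector [0, 0, 0], vector [1, (1 / 2), (1 / 2)]],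
    vector [vector [(1 / 2), (1 / 2), 1], vector [0, 0, 0], vector [(- 1), (- (1 / 2)), (- (1 / 2))]],
    vector [vector [0, 0, 1], vector [0, 0, 0], vector [0, 0, 0]],
    vector [vector [(- 1), (1 / 2), (- (1 / 2))], vector [1, 0, (1 / 2)], vector [0, 0, (- (1 / 2))]],
    vector [vector [(2 / 3), 1, (1 / 3)], vector [0, 0, (- (1 / 3))], vector [0, 0, (1 / 3)]],
    vector [vector [0, 1, 0], vector [(1 / 2), 0, 0], vector [0, 0, 0]],
    vector [vector [1, (- (1 / 2)), (1 / 2)], vector [1, 0, (- (1 / 2))], vector [0, 0, (1 / 2)]],
    vector [vector [0, 1, 0], vector [(- (1 / 2)), 0, 0], vector [0, 0, 0]],
    vector [vector [0, 0, 1], vector [1, 0, (- 1)], vector [(- 1), 0, 0]],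
    vector [vector [0, 1, 1], vector [1, 0, (- 1)], vector [(- 1), (- 1), 0]],
    vector [vector [0, 0, 1], vector [(- 1), 0, (- 1)], vector [1, 0, 0]],
    vector [vector [0, 1, (- 1)], vector [1, 0, 1], vector [(- 1), (- 1), 0]],
    vector [vector [0, 0, 1], vector [0, 0, (- 1)], vector [0, 0, 0]]] ! i"

definition bb :: "nat \<Rightarrow> complex^3^3" where
  "bb i = [
    vector [vector [(- (1 / 2)), 0, 0], vector [(1 / 2), 0, (- (1 / 4))], vector [(- (1 / 2)), (- (1 / 2)), (- 1)]],
    vector [vector [0, 0, 0], vector [0, 0, 1], vector [0, (- (1 / 2)), 0]],
    vector [vector [0, 0, 0], vector [0, 0, 1], vector [0, 1, 0]],
    vector [vector [0, 0, 0], vector [0, 0, 1], vector [0, 0, 0]],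
    vector [vector [(1 / 2), 0, 0], vector [(- (1 / 2)), 0, (- (3 / 4))], vector [(1 / 2), 1, 1]],
    vector [vector [(1 / 2), (1 / 2), 1], vector [0, 0, 0], vector [(- 1), (- (1 / 2)), (- (1 / 2))]],
    vector [vector [0, 0, 1], vector [0, 0, 0], vector [0, 0, 0]],
    vector [vector [(1 / 2), (1 / 2), 1], vector [0, 0, 0], vector [1, (- (1 / 2)), (- (1 / 2))]],
    vector [vector [(1 / 2), (1 / 2), 0], vector [0, 0, 0], vector [1, (- (1 / 2)), (- (1 / 2))]],
    vector [vector [0, 0, 0], vector [0, 0, 0], vector [1, 0, 0]],
    vector [vector [1, (- (1 / 2)), (1 / 2)], vector [1, 0, (- (1 / 2))], vector [0, 0, (1 / 2)]],
    vector [vector [(- (2 / 5)), 1, (- (1 / 5))], vector [0, 0, (1 / 5)], vector [0, 0, (- (1 / 5))]],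
    vector [vector [0, 1, 0], vector [(- (1 / 2)), 0, 0], vector [0, 0, 0]],
    vector [vector [(- 1), (1 / 2), (- (1 / 2))], vector [1, 0, (1 / 2)], vector [0, 0, (- (1 / 2))]],
    vector [vector [0, 1, 0], vector [(1 / 2), 0, 0], vector [0, 0, 0]],
    vector [vector [0, 1, 1], vector [1, 0, (- 1)], vector [(- 1), (- 1), 0]],
    vector [vector [0, 0, 1], vector [1, 0, (- 1)], vector [(- 1), 0, 0]],
    vector [vector [0, 1, (- 1)], vector [1, 0, 1], vector [(- 1), (- 1), 0]],
    vector [vector [0, 0, 1], vector [(- 1), 0, (- 1)], vector [1, 0, 0]],
    vector [vector [0, (1 / 2), 0], vector [1, 0, 0], vector [(- 1), (- (1 / 2)), 0]]] ! i"

definition cc :: "nat \<Rightarrow> complex^3^3" where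
  "cc i = [
    vector [vector [0, 0, 0], vector [0, 0, (- 2)], vector [0, (- 2), 0]],
    vector [vector [0, (- (4 / 3)), (4 / 3)], vector [0, (- (4 / 3)), (4 / 3)], vector [0, (- (10 / 3)), (4 / 3)]],
    vector [vector [0, (- (2 / 3)), (2 / 3)], vector [0, (- (2 / 3)), (2 / 3)], vector [0, (1 / 3), (2 / 3)]],
    vector [vector [0, (- 2), 2], vector [0, (- 2), 4], vector [0, (- 3), 2]],
    vector [vector [0, 0, 0], vector [0, 0, 0], vector [0, (- 2), 0]],
    vector [vector [0, 0, 0], vector [0, 0, 0], vector [1, 0, 0]],
    vector [vector [(- 1), 0, 2], vector [(- 1), 0, 1], vector [(- 2), 0, 1]],
    vector [vector [0, 0, (- 2)], vector [0, 0, 0], vector [1, 0, 0]],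
    vector [vector [0, 0, (- 2)], vector [0, 0, 0], vector [0, 0, 0]],
    vector [vector [1, 0, 2], vector [1, 0, (- 1)], vector [0, 0, (- 1)]],
    vector [vector [0, (- (1 / 2)), 0], vector [1, 0, 0], vector [0, 0, 0]],
    vector [vector [0, (15 / 4), 0], vector [0, 0, 0], vector [0, 0, 0]],
    vector [vector [(- 1), (- 2), 0], vector [1, 1, 0], vector [(- 1), 1, 0]],
    vector [vector [0, (- (1 / 2)), 0], vector [(- 1), 0, 0], vector [0, 0, 0]],
    vector [vector [1, (- 2), 0], vector [(- 1), (- 1), 0], vector [1, (- 1), 0]],
    vector [vector [0, (- (1 / 2)), (1 / 2)], vector [(- (1 / 2)), 0, (1 / 2)], vector [(1 / 2), (- (1 / 2)), 0]],
    vector [vector [0, (1 / 2), (- (1 / 2))], vector [0, 0, 0], vector [(- (1 / 2)), (1 / 2), 0]],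
    vector [vector [0, (- (1 / 2)), (1 / 2)], vector [(- (1 / 2)), 0, (1 / 2)], vector [(- (1 / 2)), (1 / 2), 0]],
    vector [vector [0, (1 / 2), (- (1 / 2))], vector [0, 0, 0], vector [(1 / 2), (- (1 / 2)), 0]],
    vector [vector [0, 0, 0], vector [2, 0, (- 2)], vector [0, 0, 0]]] ! i"


lemma sum20: "(\<Sum>i<20. f i) = (f 0 + f 1 + f 2 + f 3 + f 4 + f 5 + f 6 + f 7 + f 8 + f 9 + f 10 + f 11 + f 12 + f 13 + f 14 + f 15 + f 16 + f 17 + f 18 + f 19)" for f :: "nat \<Rightarrow> 'a::comm_monoid_add"
  by (simp add: eval_nat_numeral ac_simps)

lemma key:
  fixes x y :: "complex^3^3"
  assumes hx: "trace x = 0" and hy: "trace y = 0"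
  shows "x ** y - y ** x = (\<Sum>i<20. mat_scale (mat_functional (aa i) x * mat_functional (bb i) y) (cc i))"
proof -
  have "x$1$1 + x$2$2 + x$3$3 = 0" using hx by (simp add: trace_def sum_3 add.assoc)
  then have x33: "x$3$3 = - x$1$1 - x$2$2" by (metis add_diff_cancel_left' diff_diff_eq2 diff_zero minus_diff_eq add.commute diff_diff_eq add_diff_cancel_right')
  have "y$1$1 + y$2$2 + y$3$3 = 0" using hy by (simp add: trace_def sum_3 add.assoc)
  then have y33: "y$3$3 = - y$1$1 - y$2$2" by (metis add_diff_cancel_left' diff_diff_eq2 diff_zero minus_diff_eq add.commute diff_diff_eq add_diff_cancel_right')
  show ?thesis
    unfolding vec_eq_iff forall_3 sum20
    by (simp add: aa_def bb_def cc_def mat_functional_def mat_scale_def matrix_matrix_mult_def sum_3 x33 y33 algebra_simps)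
qed

theorem theorem2:
  shows "sl_struct_rank TYPE(3) \<le> 20"
proof -
  have "sl_struct_decomp TYPE(3) 20"
    unfolding sl_struct_decomp_def
  proof (intro exI conjI ballI allI impI)
    fix i assume "i < (20::nat)"
    then have "i \<in> {..<20}" by simp
    also have "{..<20::nat} = {0, 1, 2, 3, 4, 5, 6, 7, 8, 9, 10, 11, 12, 13, 14, 15, 16, 17, 18, 19}" by (simp add: eval_nat_numeral lessThan_Suc insert_commute)
    finally show "cc i \<in> sl"
      by (auto simp: cc_def sl_def trace_def sum_3)
  next
    fix x y :: "complex^3^3" assume "x \<in> sl" "y \<in> sl"
    then show "x ** y - y ** x = (\<Sum>i<20. mat_scale (mat_functional (aa i) x * mat_functional (bb i) y) (cc i))"
      using key by (simp add: sl_def)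
  qed
  then show ?thesis unfolding sl_struct_rank_def by (rule Least_le)
qed

end
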